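(* Let $q$ be the semi-Markov kernel of a homogeneous $d$-dimensional multi-time Markov renewal chain, let $u=(\mathbbm{I}_s-q)^{(-1)}=\sum_{n\ge0}q^{(n)}$, and let $G\in\mathcal{M}_s(\mathbb{N}^d)$ be given. Then the multi-time Markov renewal equation $L=G+q*L$ in the unknown $L\in\mathcal{M}_s(\mathbb{N}^d)$ has a unique solution, given by $L=u*G$.
   Context: $E=\{1,\dots,s\}$; $\mathcal{M}_s(\mathbb{N}^d)$ is the set of functions $\mathbb{N}^d\to\mathbb{R}^{s\times s}$, with convolution $[A*B](k)=\sum_{l+l'=k}A(l)B(l')$, identity $\mathbbm{I}_s$ ($\mathbbm{I}_s(0_d)=I_s$, zero elsewhere), powers $A^{(0)}=\mathbbm{I}_s$, $A^{(n)}=A*A^{(n-1)}$, convolutional inverse $A^{(-1)}$. A homogeneous $d$-dimensional multi-time Markov renewal chain is a process $(J_n,S_n)_{n\in\mathbb{N}}$, $J_n\in E$, $S_n\in\mathbb{N}^d$, $S_0=0_d$, $S_n<S_{n+1}$ (componentwise $\le$, not equal), with a.s. $\mathbb{P}(J_{n+1}=j,S_{n+1}-S_n=k\mid J_{0:n},S_{0:n})=q_{J_nj}(k)$ where $q_{ij}(k)=\mathbb{P}(J_{n+1}=j,S_{n+1}-S_n=k\mid J_n=i)$ is independent of $n$ (so $q(0_d)=O_s$). *)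

theory Defs
  imports "HOL-Analysis.Analysis"
begin

text \<open>Multi-indices in N^d are functions 'd => nat for a finite index type 'd
  (d = CARD('d)); s x s real matrices are real^'s^'s, with E = UNIV :: 's set.
  An element of M_s(N^d) is a function ('d => nat) => real^'s^'s.\<close>

type_synonym ('d, 's) mfun = "('d \<Rightarrow> nat) \<Rightarrow> real^'s^'s"

definition conv :: "('d::finite, 's::finite) mfun \<Rightarrow> ('d, 's) mfun \<Rightarrow> ('d, 's) mfun" where
  "conv A B k = (\<Sum>l \<in> {l. \<forall>i. l i \<le> k i}. A l ** B (\<lambda>i. k i - l i))"

definition unit_mfun :: "('d::finite, 's::finite) mfun" where
  "unit_mfun k = (if k = (\<lambda>_. 0) then mat 1 else 0)"

fun conv_pow :: "('d::finite, 's::finite) mfun \<Rightarrow> nat \<Rightarrow> ('d, 's) mfun" where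
  "conv_pow A 0 = unit_mfun"
| "conv_pow A (Suc n) = conv A (conv_pow A n)"

text \<open>Semi-Markov kernel of a homogeneous multi-time Markov renewal chain:
  q_ij(k) = P(J_{n+1}=j, S_{n+1}-S_n=k | J_n=i); nonnegative, q(0_d) = O,
  and each row is a probability distribution on E x N^d.\<close>
definition semi_markov_kernel :: "('d::finite, 's::finite) mfun \<Rightarrow> bool" where
  "semi_markov_kernel q \<longleftrightarrow>
     (\<forall>k i j. 0 \<le> q k $ i $ j) \<and>
     q (\<lambda>_. 0) = 0 \<and>
     (\<forall>i. ((\<lambda>k. \<Sum>j\<in>UNIV. q k $ i $ j) has_sum 1) UNIV)"

end

theory Submission
  imports Defs
begin

lemma mm_radd: "((A::real^'n^'m) + B) ** (C::real^'p^'n) = A ** C + B ** C"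
  by (vector matrix_matrix_mult_def sum.distrib[symmetric] field_simps)

lemma mm_sum_right: "finite S \<Longrightarrow> (A::real^'n^'m) ** (\<Sum>x\<in>S. f x :: real^'p^'n) = (\<Sum>x\<in>S. A ** f x)"
  by (induct S rule: finite_induct) (auto simp: matrix_add_ldistrib)

lemma mm_sum_left: "finite S \<Longrightarrow> (\<Sum>x\<in>S. f x :: real^'n^'m) ** (A::real^'p^'n) = (\<Sum>x\<in>S. f x ** A)"
  by (induct S rule: finite_induct) (auto simp: mm_radd)

definition nrm :: "('d::finite \<Rightarrow> nat) \<Rightarrow> nat" where
  "nrm m = (\<Sum>i\<in>UNIV. m i)"

lemma fin_box: "finite {l::'d::finite \<Rightarrow> nat. \<forall>i. l i \<le> k i}"
proof -
  have "{l::'d \<Rightarrow> nat. \<forall>i. l i \<le> k i} = PiE UNIV (\<lambda>i. {..k i})"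
    by (auto simp: PiE_def Pi_def)
  then show ?thesis by (simp add: finite_PiE)
qed

lemma nrm_diff: "\<forall>i. l i \<le> k i \<Longrightarrow> nrm (\<lambda>i. k i - l i) + nrm l = nrm (k::'d::finite \<Rightarrow> nat)"
  unfolding nrm_def by (simp add: sum.distrib[symmetric])

lemma nrm_le: "\<forall>i. l i \<le> k i \<Longrightarrow> nrm l \<le> nrm (k::'d::finite \<Rightarrow> nat)"
  using nrm_diff by (metis le_add2)

lemma nrm_pos: "l \<noteq> (\<lambda>_. 0) \<Longrightarrow> 0 < nrm (l::'d::finite \<Rightarrow> nat)"
proof -
  assume "l \<noteq> (\<lambda>_. 0)"
  then obtain i where "l i \<noteq> 0" by auto
  moreover have "l i \<le> (\<Sum>j\<in>UNIV. l j)" by (rule member_le_sum) auto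
  ultimately show ?thesis unfolding nrm_def by linarith
qed

lemma nrm_lt: "\<forall>i. l i \<le> k i \<Longrightarrow> l \<noteq> (\<lambda>_. 0) \<Longrightarrow> nrm (\<lambda>i. k i - l i) < nrm (k::'d::finite \<Rightarrow> nat)"
proof -
  assume a: "\<forall>i. l i \<le> k i" "l \<noteq> (\<lambda>_. 0)"
  show ?thesis using nrm_diff[OF a(1)] nrm_pos[OF a(2)] by linarith
qed

lemma conv_unit: "conv unit_mfun G = (G::('d::finite,'s::finite) mfun)"
proof
  fix k :: "'d \<Rightarrow> nat"
  have "conv unit_mfun G k = (\<Sum>l\<in>{l. \<forall>i. l i \<le> k i}. if l = (\<lambda>_. 0) then G k else 0)"
    unfolding conv_def by (rule sum.cong) (auto simp: unit_mfun_def)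
  also have "\<dots> = G k" using fin_box[of k] by (simp add: sum.delta')
  finally show "conv unit_mfun G k = G k" .
qed

lemma conv_assoc: "conv A (conv B C) = conv (conv A B) (C::('d::finite,'s::finite) mfun)"
proof
  fix k :: "'d \<Rightarrow> nat"
  let ?S1 = "Sigma {l. \<forall>i. l i \<le> k i} (\<lambda>l. {m. \<forall>i. m i \<le> k i - l i})"
  let ?S2 = "Sigma {p. \<forall>i. p i \<le> k i} (\<lambda>p. {l. \<forall>i. l i \<le> p i})"
  have "conv A (conv B C) k = (\<Sum>(l,m)\<in>?S1. A l ** (B m ** C (\<lambda>i. k i - l i - m i)))"
    unfolding conv_def
    by (simp add: mm_sum_right fin_box sum.Sigma[symmetric])
  also have "\<dots> = (\<Sum>(p,l)\<in>?S2. (A l ** B (\<lambda>i. p i - l i)) ** C (\<lambda>i. k i - p i))"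
  proof (rule sum.reindex_bij_witness[where i="\<lambda>(p,l). (l, \<lambda>i. p i - l i)" and j="\<lambda>(l,m). (\<lambda>i. l i + m i, l)"])
    fix a assume "a \<in> ?S2" then show "(case case a of (p, l) \<Rightarrow> (l, \<lambda>i. p i - l i) of (l, m) \<Rightarrow> (\<lambda>i. l i + m i, l)) = a"
      by (auto simp: fun_eq_iff)
  next
    fix a assume "a \<in> ?S2" then show "(case a of (p, l) \<Rightarrow> (l, \<lambda>i. p i - l i)) \<in> ?S1"
      by (auto simp: fun_eq_iff intro: diff_le_mono order_trans)
  next
    fix a assume "a \<in> ?S1" then show "(case case a of (l, m) \<Rightarrow> (\<lambda>i. l i + m i, l) of (p, l) \<Rightarrow> (l, \<lambda>i. p i - l i)) = a"
      by (auto simp: fun_eq_iff)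
  next
    fix a assume "a \<in> ?S1" then show "(case a of (l, m) \<Rightarrow> (\<lambda>i. l i + m i, l)) \<in> ?S2"
      by (auto simp: fun_eq_iff) (metis le_diff_conv2 add.commute)
  next
    fix a assume "a \<in> ?S1" then show "(case case a of (l, m) \<Rightarrow> (\<lambda>i. l i + m i, l) of (p, l) \<Rightarrow> (A l ** B (\<lambda>i. p i - l i)) ** C (\<lambda>i. k i - p i)) = (case a of (l, m) \<Rightarrow> A l ** (B m ** C (\<lambda>i. k i - l i - m i)))"
      by (auto simp: matrix_mul_assoc diff_diff_left)
  qed
  also have "\<dots> = conv (conv A B) C k"
    unfolding conv_def
    by (simp add: mm_sum_left fin_box sum.Sigma[symmetric])
  finally show "conv A (conv B C) k = conv (conv A B) C k" .
qed

lemma smk_zero: "semi_markov_kernel q \<Longrightarrow> q (\<lambda>_. 0) = 0"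
  unfolding semi_markov_kernel_def by auto

lemma conv_q_cong:
  assumes "semi_markov_kernel q"
    and "\<And>m. nrm m < nrm k \<Longrightarrow> X m = Y m"
  shows "conv q X k = conv q Y (k::'d::finite \<Rightarrow> nat)"
  unfolding conv_def
proof (rule sum.cong)
  fix l assume l: "l \<in> {l. \<forall>i. l i \<le> k i}"
  show "q l ** X (\<lambda>i. k i - l i) = q l ** Y (\<lambda>i. k i - l i)"
  proof (cases "l = (\<lambda>_. 0)")
    case True then show ?thesis using smk_zero[OF assms(1)] by simp
  next
    case False
    then have "nrm (\<lambda>i. k i - l i) < nrm k" using nrm_lt l by auto
    then show ?thesis using assms(2) by simp
  qed
qed simp

lemma pow_zero:
  assumes "semi_markov_kernel q"
  shows "nrm m < n \<Longrightarrow> conv_pow q n m = 0"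
proof (induction n arbitrary: m)
  case 0 then show ?case by simp
next
  case (Suc n)
  have "conv q (conv_pow q n) m = conv q (\<lambda>_. 0) m"
    by (rule conv_q_cong[OF assms]) (use Suc in auto)
  also have "\<dots> = 0" unfolding conv_def by simp
  finally show ?case by simp
qed

lemma u_trunc:
  assumes "semi_markov_kernel q" "nrm l < M"
  shows "(\<Sum>n. conv_pow q n l) = (\<Sum>n<M. conv_pow q n l)"
  by (rule suminf_finite) (use pow_zero[OF assms(1)] assms(2) in auto)

lemma X_trunc:
  assumes "semi_markov_kernel q" "nrm m < M"
  shows "conv (\<lambda>k. \<Sum>n. conv_pow q n k) G m = (\<Sum>n<M. conv (conv_pow q n) G m)"
proof -
  have "conv (\<lambda>k. \<Sum>n. conv_pow q n k) G m
      = (\<Sum>l\<in>{l. \<forall>i. l i \<le> m i}. (\<Sum>n<M. conv_pow q n l) ** G (\<lambda>i. m i - l i))"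
    unfolding conv_def
  proof (rule sum.cong)
    fix l assume "l \<in> {l. \<forall>i. l i \<le> m i}"
    then have "nrm l < M" using nrm_le[of l m] assms(2) by auto
    then show "(\<Sum>n. conv_pow q n l) ** G (\<lambda>i. m i - l i) = (\<Sum>n<M. conv_pow q n l) ** G (\<lambda>i. m i - l i)"
      using u_trunc[OF assms(1)] by simp
  qed simp
  also have "\<dots> = (\<Sum>n<M. conv (conv_pow q n) G m)"
    unfolding conv_def by (simp add: mm_sum_left sum.swap[of _ "{..<M}"])
  finally show ?thesis .
qed

theorem corollary3:
  fixes q G u :: "('d::finite, 's::finite) mfun"
  assumes "semi_markov_kernel q"
    and "u = (\<lambda>k. \<Sum>n. conv_pow q n k)"
  shows "(\<exists>!L. L = (\<lambda>k. G k + conv q L k))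
         \<and> conv u G = (\<lambda>k. G k + conv q (conv u G) k)"
proof -
  have sol: "conv u G = (\<lambda>k. G k + conv q (conv u G) k)"
  proof
    fix k :: "'d \<Rightarrow> nat"
    define N where "N = nrm k"
    have "conv u G k = (\<Sum>n<Suc N. conv (conv_pow q n) G k)"
      unfolding assms(2) by (rule X_trunc[OF assms(1)]) (simp add: N_def)
    also have "\<dots> = G k + (\<Sum>n<N. conv q (conv (conv_pow q n) G) k)"
      unfolding sum.lessThan_Suc_shift by (simp add: conv_unit conv_assoc)
    also have "(\<Sum>n<N. conv q (conv (conv_pow q n) G) k) = conv q (\<lambda>m. \<Sum>n<N. conv (conv_pow q n) G m) k"
      unfolding conv_def[of q] by (simp add: mm_sum_right sum.swap[of _ "{..<N}"])
    also have "\<dots> = conv q (conv u G) k"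
      by (rule conv_q_cong[OF assms(1)]) (simp add: assms(2) X_trunc[OF assms(1)] N_def)
    finally show "conv u G k = G k + conv q (conv u G) k" .
  qed
  have uniq: "L1 = L2" if h1: "L1 = (\<lambda>k. G k + conv q L1 k)" and h2: "L2 = (\<lambda>k. G k + conv q L2 k)" for L1 L2
  proof
    fix k show "L1 k = L2 k"
    proof (induction k rule: measure_induct_rule[of nrm])
      case (less k)
      have "L1 k = G k + conv q L1 k" by (subst h1) simp
      also have "conv q L1 k = conv q L2 k"
        by (rule conv_q_cong[OF assms(1)]) (use less in auto)
      also have "G k + conv q L2 k = L2 k" by (subst (2) h2) simp
      finally show ?case .
    qed
  qed
  show ?thesis using sol uniq by blast
qed

end
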